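(* If a path $\omega\in\Omega$ is wCH-random for a computable temporal forecasting system $\varphi$, then $\min I_\textnormal{wCH}(\omega)\le\liminf_{n\to\infty}\overline{\varphi}(\omega_{1:n})$ and $\limsup_{n\to\infty}\underline{\varphi}(\omega_{1:n})\le\max I_\textnormal{wCH}(\omega)$.
   Context: $\mathcal{X}=\{0,1\}$; $\Omega=\mathcal{X}^{\mathbb{N}}$ (paths); $\mathbb{S}=\bigcup_{n\ge0}\mathcal X^n$ (situations), $|s|$ length, $\omega_{1:n}=(\omega_1,\dots,\omega_n)$, $\omega_{1:0}$ the empty string. $\mathcal{I}$: nonempty closed intervals $I\subseteq[0,1]$. A forecasting system is $\varphi:\mathbb S\to\mathcal I$, $\underline\varphi=\min\varphi$, $\overline\varphi=\max\varphi$; temporal if $\varphi(s)=\varphi(t)$ whenever $|s|=|t|$; an interval forecast $I$ is identified with the constant forecasting system $s\mapsto I$. $\varphi$ is computable if there are recursive $\underline q,\overline q:\mathbb S\times\mathbb N_0\to\mathbb Q$ with $|\underline\varphi(s)-\underline q(s,n)|<2^{-n}$ and $|\overline\varphi(s)-\overline q(s,n)|<2^{-n}$. A path $\omega$ is wCH-random for $\varphi$ if for every recursive temporal selection process $S:\mathbb S\to\{0,1\}$ (i.e. $S(s)$ depends only on $|s|$) with $\sum_{k=0}^{n-1}S(\omega_{1:k})\to\infty$: $\liminf_n \frac{\sum_{k<n}S(\omega_{1:k})[\omega_{k+1}-\underline\varphi(\omega_{1:k})]}{\sum_{k<n}S(\omega_{1:k})}\ge0$ and $\limsup_n \frac{\sum_{k<n}S(\omega_{1:k})[\omega_{k+1}-\overline\varphi(\omega_{1:k})]}{\sum_{k<n}S(\omega_{1:k})}\le0$.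 $\mathcal I_\textnormal{wCH}(\omega)=\{I\in\mathcal I:\omega\text{ wCH-random for }I\}$, $I_\textnormal{wCH}(\omega)=\bigcap_{I\in\mathcal I_\textnormal{wCH}(\omega)}I$. *)

theory Defs
  imports Complex_Main "HOL-Library.Extended_Real"
begin

datatype recf = Zr | Sc | Proj nat | Cn recf "recf list" | Pr recf recf | Mn recf

inductive rec_eval :: "recf \<Rightarrow> nat list \<Rightarrow> nat \<Rightarrow> bool" where
  zero: "rec_eval Zr xs 0"
| succ: "rec_eval Sc (x # xs) (Suc x)"
| proj: "i < length xs \<Longrightarrow> rec_eval (Proj i) xs (xs ! i)"
| comp: "length ys = length gs \<Longrightarrow> (\<forall>i < length gs. rec_eval (gs ! i) xs (ys ! i))
          \<Longrightarrow> rec_eval f ys z \<Longrightarrow> rec_eval (Cn f gs) xs z"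
| pr0: "rec_eval f xs y \<Longrightarrow> rec_eval (Pr f g) (0 # xs) y"
| prS: "rec_eval (Pr f g) (n # xs) y \<Longrightarrow> rec_eval g (y # n # xs) z
          \<Longrightarrow> rec_eval (Pr f g) (Suc n # xs) z"
| mu: "rec_eval f (n # xs) 0 \<Longrightarrow> (\<forall>m < n. \<exists>y. y \<noteq> 0 \<and> rec_eval f (m # xs) y)
          \<Longrightarrow> rec_eval (Mn f) xs n"

definition recursive_fn :: "nat \<Rightarrow> (nat list \<Rightarrow> nat) \<Rightarrow> bool" where
  "recursive_fn k f \<longleftrightarrow> (\<exists>c. \<forall>xs. length xs = k \<longrightarrow> rec_eval c xs (f xs))"

text \<open>Situations are finite binary strings (True = 1, False = 0); a path is a map
  nat => bool where omega k is the outcome omega_(k+1).\<close>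

type_synonym sit = "bool list"
type_synonym path = "nat \<Rightarrow> bool"

definition prefix :: "path \<Rightarrow> nat \<Rightarrow> sit" where
  "prefix \<omega> n = map \<omega> [0..<n]"

text \<open>Bijective base-2 coding of situations as natural numbers.\<close>
fun enc_sit :: "sit \<Rightarrow> nat" where
  "enc_sit [] = 0"
| "enc_sit (b # s) = 2 * enc_sit s + (if b then 2 else 1)"

definition recursive_sel :: "(sit \<Rightarrow> bool) \<Rightarrow> bool" where
  "recursive_sel S \<longleftrightarrow> recursive_fn 1 (\<lambda>xs. SOME v. \<exists>s. xs = [enc_sit s] \<and> v = (if S s then 1 else 0))"

definition recursive_rat2 :: "(sit \<Rightarrow> nat \<Rightarrow> rat) \<Rightarrow> bool" where
  "recursive_rat2 q \<longleftrightarrow> (\<exists>a b c. recursive_fn 2 a \<and> recursive_fn 2 b \<and> recursive_fn 2 c \<and>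
     (\<forall>s n. q s n = (of_nat (a [enc_sit s, n]) - of_nat (b [enc_sit s, n]))
                     / (of_nat (c [enc_sit s, n]) + 1)))"

text \<open>An interval forecast is a pair (lo, hi) standing for [lo, hi] subset of [0,1].\<close>
definition valid_interval :: "real \<times> real \<Rightarrow> bool" where
  "valid_interval I \<longleftrightarrow> 0 \<le> fst I \<and> fst I \<le> snd I \<and> snd I \<le> 1"

definition forecasting_system :: "(sit \<Rightarrow> real \<times> real) \<Rightarrow> bool" where
  "forecasting_system \<phi> \<longleftrightarrow> (\<forall>s. valid_interval (\<phi> s))"

definition temporal :: "(sit \<Rightarrow> 'a) \<Rightarrow> bool" where
  "temporal \<phi> \<longleftrightarrow> (\<forall>s t. length s = length t \<longrightarrow> \<phi> s = \<phi> t)"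

definition computable_fs :: "(sit \<Rightarrow> real \<times> real) \<Rightarrow> bool" where
  "computable_fs \<phi> \<longleftrightarrow> (\<exists>ql qh. recursive_rat2 ql \<and> recursive_rat2 qh \<and>
     (\<forall>s n. \<bar>fst (\<phi> s) - real_of_rat (ql s n)\<bar> < 2 powr (- real n) \<and>
            \<bar>snd (\<phi> s) - real_of_rat (qh s n)\<bar> < 2 powr (- real n)))"

definition sel_count :: "(sit \<Rightarrow> bool) \<Rightarrow> path \<Rightarrow> nat \<Rightarrow> real" where
  "sel_count S \<omega> n = (\<Sum>k<n. of_bool (S (prefix \<omega> k)))"

definition wCH_random :: "(sit \<Rightarrow> real \<times> real) \<Rightarrow> path \<Rightarrow> bool" where
  "wCH_random \<phi> \<omega> \<longleftrightarrow> (\<forall>S. recursive_sel S \<and> temporal S \<and>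
      filterlim (sel_count S \<omega>) at_top sequentially \<longrightarrow>
      liminf (\<lambda>n. ereal ((\<Sum>k<n. of_bool (S (prefix \<omega> k)) *
                   (of_bool (\<omega> k) - fst (\<phi> (prefix \<omega> k)))) / sel_count S \<omega> n)) \<ge> 0 \<and>
      limsup (\<lambda>n. ereal ((\<Sum>k<n. of_bool (S (prefix \<omega> k)) *
                   (of_bool (\<omega> k) - snd (\<phi> (prefix \<omega> k)))) / sel_count S \<omega> n)) \<le> 0)"

definition I_wCH_family :: "path \<Rightarrow> (real \<times> real) set" where
  "I_wCH_family \<omega> = {I. valid_interval I \<and> wCH_random (\<lambda>_. I) \<omega>}"

definition I_wCH :: "path \<Rightarrow> real set" where
  "I_wCH \<omega> = (\<Inter>I \<in> I_wCH_family \<omega>. {fst I..snd I})"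

end

theory Submission
  imports Defs
begin

lemma proj': "i < length xs \<Longrightarrow> xs ! i = v \<Longrightarrow> rec_eval (Proj i) xs v"
  using rec_eval.proj by blast

lemma cn1: "rec_eval g1 xs ya \<Longrightarrow> rec_eval f [ya] z \<Longrightarrow> rec_eval (Cn f [g1]) xs z"
  by (rule rec_eval.comp[of "[ya]"]) auto

lemma cn2: "rec_eval g1 xs ya \<Longrightarrow> rec_eval g2 xs yb \<Longrightarrow> rec_eval f [ya,yb] z
   \<Longrightarrow> rec_eval (Cn f [g1,g2]) xs z"
  by (rule rec_eval.comp[of "[ya,yb]"]) (auto simp: less_Suc_eq nth_Cons')

fun constr :: "nat \<Rightarrow> recf" where
  "constr 0 = Zr" | "constr (Suc k) = Cn Sc [constr k]"

lemma rec_const: "rec_eval (constr k) xs k"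
  by (induction k) (auto intro: rec_eval.intros cn1)

definition "add_r = Pr (Proj 0) (Cn Sc [Proj 0])"
lemma rec_add: "rec_eval add_r (n # y # xs) (n + y)"
  unfolding add_r_def
proof (induction n)
  case 0 then show ?case by (auto intro!: rec_eval.pr0 proj')
next
  case (Suc n) then show ?case
    by (auto intro!: rec_eval.prS cn1 proj' rec_eval.succ[of _ "[]", simplified])
qed

definition "mul_r = Pr Zr (Cn add_r [Proj 2, Proj 0])"
lemma rec_mul: "rec_eval mul_r (n # y # xs) (n * y)"
  unfolding mul_r_def
proof (induction n)
  case 0 then show ?case by (auto intro!: rec_eval.pr0 rec_eval.zero)
next
  case (Suc n) then show ?case
    by (auto intro!: rec_eval.prS cn2 proj' rec_add[of _ _ "[]", simplified])
qed

definition "pred_r = Pr Zr (Proj 1)"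
lemma rec_pred: "rec_eval pred_r (n # xs) (n - 1)"
  unfolding pred_r_def
proof (induction n)
  case 0 then show ?case by (simp add: rec_eval.pr0 rec_eval.zero)
next
  case (Suc m)
  have "rec_eval (Proj 1) ((m - 1) # m # xs) m" by (rule proj') auto
  with Suc.IH show ?case by (simp add: rec_eval.prS)
qed

definition "sub_r = Pr (Proj 0) (Cn pred_r [Proj 0])"
lemma rec_sub: "rec_eval sub_r (n # x # xs) (x - n)"
  unfolding sub_r_def
proof (induction n)
  case 0 then show ?case by (simp add: rec_eval.pr0 proj')
next
  case (Suc n)
  have "rec_eval (Cn pred_r [Proj 0]) ((x - n) # n # x # xs) (x - n - 1)"
    by (rule cn1[OF proj' rec_pred]) auto
  with Suc.IH have "rec_eval (Pr (Proj 0) (Cn pred_r [Proj 0])) (Suc n # x # xs) (x - n - 1)"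
    by (rule rec_eval.prS)
  then show ?case by simp
qed

definition "lt_r = Cn sub_r [Cn sub_r [sub_r, constr 1], constr 1]"
lemma rec_lt: "rec_eval lt_r (u # v # xs) (if u < v then 1 else 0)"
proof -
  have "rec_eval lt_r (u # v # xs) (1 - (1 - (v - u)))"
    unfolding lt_r_def
    by (intro cn2[where ya="1 - (v - u)" and yb=1] cn2[where ya="v - u" and yb=1]
         rec_sub rec_const rec_sub[of _ _ "[]"])
  moreover have "(1 - (1 - (v - u))) = (if u < v then 1 else (0::nat))" by auto
  ultimately show ?thesis by simp
qed

definition "pow2_r = Pr (constr 1) (Cn mul_r [Proj 0, constr 2])"
lemma rec_pow2: "rec_eval pow2_r (n # xs) (2 ^ n)"
  unfolding pow2_r_def
proof (induction n)
  case 0 then show ?case using rec_eval.pr0 rec_const[of 1 xs] by simp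
next
  case (Suc n)
  have "rec_eval (Cn mul_r [Proj 0, constr 2]) ((2^n) # n # xs) (2^n * 2)"
    by (rule cn2[OF proj' rec_const rec_mul]) auto
  with Suc.IH have "rec_eval (Pr (constr 1) (Cn mul_r [Proj 0, constr 2])) (Suc n # xs) (2^n*2)"
    by (rule rec_eval.prS)
  then show ?case by (simp add: mult.commute)
qed

lemma enc_bounds: "2 ^ length s \<le> enc_sit s + 1 \<and> enc_sit s + 1 < 2 ^ (length s + 1)"
  by (induction s) auto

lemma enc_rep: "enc_sit (replicate k False) = 2 ^ k - 1"
proof (induction k)
  case (Suc k)
  have "(1::nat) \<le> 2 ^ k" by simp
  then have "Suc (2 * (2 ^ k - 1)) = 2 * 2 ^ k - (1::nat)" by linarith
  then show ?case using Suc by simp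
qed simp

lemma enc_surj: "\<exists>s. enc_sit s = x"
proof (induction x rule: less_induct)
  case (less x)
  show ?case
  proof (cases "x = 0")
    case True then show ?thesis by (intro exI[of _ "[]"]) simp
  next
    case False
    show ?thesis
    proof (cases "odd x")
      case True
      then obtain m where m: "x = 2 * m + 1" by (metis oddE)
      with less[of m] obtain s where "enc_sit s = m" by auto
      then show ?thesis using m by (intro exI[of _ "False # s"]) simp
    next
      case F: False
      then obtain m where m: "x = 2 * m" by blast
      with False have "m \<ge> 1" by simp
      with m have "m - 1 < x" by simp
      with less[of "m - 1"] obtain s where "enc_sit s = m - 1" by auto
      then show ?thesis using m \<open>m \<ge> 1\<close> by (intro exI[of _ "True # s"]) simp
    qed
  qed
qed

definition "lenf_r = Cn sub_r [Cn lt_r [Cn Sc [Proj 1], Cn pow2_r [Cn Sc [Proj 0]]], constr 1]"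
lemma rec_lenf: "rec_eval lenf_r (k # x # xs) (if x + 1 < 2 ^ (k+1) then 0 else 1)"
proof -
  have a: "rec_eval (Cn Sc [Proj 1]) (k # x # xs) (x+1)"
    by (rule cn1[OF proj']) (auto intro: rec_eval.succ[of _ "[]", simplified])
  have b: "rec_eval (Cn pow2_r [Cn Sc [Proj 0]]) (k # x # xs) (2^(k+1))"
    using rec_pow2[of "Suc k" "[]"]
    by (intro cn1[OF cn1[OF proj']]) (auto intro: rec_eval.succ[of _ "[]", simplified])
  have c: "rec_eval (Cn lt_r [Cn Sc [Proj 1], Cn pow2_r [Cn Sc [Proj 0]]]) (k # x # xs)
     (if x + 1 < 2 ^ (k+1) then 1 else 0)"
    by (rule cn2[OF a b rec_lt])
  have "rec_eval lenf_r (k # x # xs) (1 - (if x + 1 < 2 ^ (k+1) then 1 else 0))"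
    unfolding lenf_r_def by (rule cn2[OF c rec_const rec_sub])
  then show ?thesis by (simp split: if_splits)
qed

definition "len_r = Mn lenf_r"
lemma rec_len: "rec_eval len_r [enc_sit s] (length s)"
  unfolding len_r_def
proof (rule rec_eval.mu)
  show "rec_eval lenf_r [length s, enc_sit s] 0"
    using rec_lenf[of "length s" "enc_sit s" "[]"] enc_bounds[of s] by simp
  show "\<forall>m<length s. \<exists>y. y \<noteq> 0 \<and> rec_eval lenf_r [m, enc_sit s] y"
  proof (intro allI impI)
    fix m assume "m < length s"
    then have "(2::nat) ^ (m+1) \<le> 2 ^ length s" by (intro power_increasing) auto
    then have "\<not> enc_sit s + 1 < 2 ^ (m+1)" using enc_bounds[of s] by linarith
    then show "\<exists>y. y \<noteq> 0 \<and> rec_eval lenf_r [m, enc_sit s] y"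
      using rec_lenf[of m "enc_sit s" "[]"] by (intro exI[of _ 1]) simp
  qed
qed

definition "e_r = Cn pred_r [Cn pow2_r [len_r]]"
lemma rec_e: "rec_eval e_r [enc_sit s] (2 ^ length s - 1)"
  unfolding e_r_def
  by (intro cn1[where ya="2 ^ length s"] cn1[where ya="length s"] rec_len rec_pow2[of _ "[]"] rec_pred[of _ "[]"])


lemma sel_from_rec:
  assumes "\<And>s. rec_eval c [enc_sit s] (if S s then 1 else (0::nat))"
  shows "recursive_sel S"
  unfolding recursive_sel_def recursive_fn_def
proof (intro exI allI impI)
  fix xs :: "nat list" assume "length xs = 1"
  then obtain x where x: "xs = [x]" by (cases xs) auto
  obtain s0 where "enc_sit s0 = x" using enc_surj by blast
  then have "\<exists>v s. xs = [enc_sit s] \<and> v = (if S s then 1 else (0::nat))" using x by blast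
  then have "\<exists>s. xs = [enc_sit s] \<and> (SOME v. \<exists>s. xs = [enc_sit s] \<and> v = (if S s then 1 else (0::nat))) = (if S s then 1 else (0::nat))"
    by (rule someI_ex[where P="\<lambda>v. \<exists>s. xs = [enc_sit s] \<and> v = (if S s then 1 else (0::nat))", OF exE]) auto
  then obtain s where xs: "xs = [enc_sit s]" and
    eq: "(SOME v. \<exists>s. xs = [enc_sit s] \<and> v = (if S s then 1 else (0::nat))) = (if S s then 1 else (0::nat))" by blast
  have F: "rec_eval c xs (if S s then 1 else (0::nat))" using assms[of s] xs by simp
  show "rec_eval c xs (SOME v. \<exists>s. xs = [enc_sit s] \<and> v = (if S s then 1 else (0::nat)))"
    by (subst eq) (rule F)
qed

definition selP :: "(nat list \<Rightarrow> nat) \<Rightarrow> (nat list \<Rightarrow> nat) \<Rightarrow> (nat list \<Rightarrow> nat) \<Rightarrow> nat \<Rightarrow> nat \<Rightarrow> nat \<Rightarrow> bool \<Rightarrow> sit \<Rightarrow> bool"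
  where "selP a b c N p d dir s = (let e = [2 ^ length s - 1, N]; X = a e * d; Y = p * (c e + 1) + b e * d
     in if dir then X < Y else Y < X)"

lemma app_r:
  assumes "recursive_fn 2 a"
  shows "\<exists>ca. \<forall>s. rec_eval (Cn ca [e_r, constr N]) [enc_sit s] (a [2 ^ length s - 1, N])"
proof -
  obtain ca where ca: "\<And>xs. length xs = 2 \<Longrightarrow> rec_eval ca xs (a xs)"
    using assms unfolding recursive_fn_def by blast
  show ?thesis
    by (rule exI[of _ ca], intro allI cn2[OF rec_e rec_const ca]) simp
qed

lemma selP_recursive:
  assumes "recursive_fn 2 a" "recursive_fn 2 b" "recursive_fn 2 c"
  shows "recursive_sel (selP a b c N p d dir)"
proof -
  obtain ca where ca: "\<And>s. rec_eval (Cn ca [e_r, constr N]) [enc_sit s] (a [2 ^ length s - 1, N])"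
    using app_r[OF assms(1)] by blast
  obtain cb where cb: "\<And>s. rec_eval (Cn cb [e_r, constr N]) [enc_sit s] (b [2 ^ length s - 1, N])"
    using app_r[OF assms(2)] by blast
  obtain cc where cc: "\<And>s. rec_eval (Cn cc [e_r, constr N]) [enc_sit s] (c [2 ^ length s - 1, N])"
    using app_r[OF assms(3)] by blast
  define Xr where "Xr = Cn mul_r [Cn ca [e_r, constr N], constr d]"
  define Yr where "Yr = Cn add_r [Cn mul_r [constr p, Cn Sc [Cn cc [e_r, constr N]]],
      Cn mul_r [Cn cb [e_r, constr N], constr d]]"
  have X: "rec_eval Xr [enc_sit s] (a [2 ^ length s - 1, N] * d)" for s
    unfolding Xr_def by (rule cn2[OF ca rec_const rec_mul])
  have Y: "rec_eval Yr [enc_sit s] (p * (c [2 ^ length s - 1, N] + 1) + b [2 ^ length s - 1, N] * d)" for s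
  proof -
    have "rec_eval (Cn Sc [Cn cc [e_r, constr N]]) [enc_sit s] (c [2 ^ length s - 1, N] + 1)"
      using cn1[OF cc rec_eval.succ[of _ "[]"]] by simp
    then show ?thesis unfolding Yr_def
      by (intro cn2[OF cn2[OF rec_const _ rec_mul] cn2[OF cb rec_const rec_mul] rec_add])
  qed
  show ?thesis
  proof (cases dir)
    case True
    show ?thesis
    proof (rule sel_from_rec[where c="Cn lt_r [Xr, Yr]"])
      fix s :: sit
      let ?e = "[2 ^ length s - 1, N]"
      have Z: "rec_eval (Cn lt_r [Xr, Yr]) [enc_sit s]
         (if a ?e * d < p * (c ?e + 1) + b ?e * d then 1 else 0)"
        by (rule cn2[OF X Y rec_lt])
      have "(if selP a b c N p d dir s then 1 else 0) =
            (if a ?e * d < p * (c ?e + 1) + b ?e * d then 1 else (0::nat))"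
        using True by (simp add: selP_def Let_def)
      with Z show "rec_eval (Cn lt_r [Xr, Yr]) [enc_sit s] (if selP a b c N p d dir s then 1 else 0)"
        by (simp only:)
    qed
  next
    case False
    show ?thesis
    proof (rule sel_from_rec[where c="Cn lt_r [Yr, Xr]"])
      fix s :: sit
      let ?e = "[2 ^ length s - 1, N]"
      have Z: "rec_eval (Cn lt_r [Yr, Xr]) [enc_sit s]
         (if p * (c ?e + 1) + b ?e * d < a ?e * d then 1 else 0)"
        by (rule cn2[OF Y X rec_lt])
      have "(if selP a b c N p d dir s then 1 else 0) =
            (if p * (c ?e + 1) + b ?e * d < a ?e * d then 1 else (0::nat))"
        using False by (simp add: selP_def Let_def)
      with Z show "rec_eval (Cn lt_r [Yr, Xr]) [enc_sit s] (if selP a b c N p d dir s then 1 else 0)"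
        by (simp only:)
    qed
  qed
qed

lemma selP_temporal: "temporal (selP a b c N p d dir)"
  unfolding temporal_def selP_def by simp


lemma div_aux1: "(C::real) > 0 \<Longrightarrow> X \<le> Y + C * t \<Longrightarrow> X / C \<le> Y / C + t"
  by (simp add: divide_simps mult.commute)
lemma div_aux2: "(C::real) > 0 \<Longrightarrow> X \<ge> Y + C * t \<Longrightarrow> X / C \<ge> Y / C + t"
  by (simp add: divide_simps mult.commute)

lemma aux3: "(y::real) < (a - r) / 2 \<Longrightarrow> - ((a - r) / 2) < x \<Longrightarrow> x \<le> y + (r - a) \<Longrightarrow> False"
  by argo
lemma aux4: "(y::real) < (r - b) / 2 \<Longrightarrow> - ((r - b) / 2) < x \<Longrightarrow> x + (r - b) \<le> y \<Longrightarrow> False"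
  by argo

lemma core_upper:
  fixes w f :: "nat \<Rightarrow> real" and sel :: "nat \<Rightarrow> bool" and a r2 :: real
  assumes cnt: "filterlim (\<lambda>n. \<Sum>k<n. of_bool (sel k) :: real) at_top sequentially"
    and R1: "limsup (\<lambda>n. ereal ((\<Sum>k<n. of_bool (sel k) * (w k - f k)) / (\<Sum>k<n. of_bool (sel k)))) \<le> 0"
    and R2: "liminf (\<lambda>n. ereal ((\<Sum>k<n. of_bool (sel k) * (w k - a)) / (\<Sum>k<n. of_bool (sel k)))) \<ge> 0"
    and sel: "\<And>k. sel k \<Longrightarrow> f k \<le> r2"
  shows "a \<le> r2"
proof (rule ccontr)
  assume "\<not> a \<le> r2"
  define \<epsilon> where "\<epsilon> = (a - r2) / 2"
  have ep: "\<epsilon> > 0" using \<open>\<not> a \<le> r2\<close> by (simp add: \<epsilon>_def)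
  have e1: "eventually (\<lambda>n. ereal ((\<Sum>k<n. of_bool (sel k) * (w k - f k)) / (\<Sum>k<n. of_bool (sel k))) < ereal \<epsilon>) sequentially"
    by (rule Limsup_lessD, rule le_less_trans[OF R1]) (simp add: ep)
  have e2: "eventually (\<lambda>n. ereal ((\<Sum>k<n. of_bool (sel k) * (w k - a)) / (\<Sum>k<n. of_bool (sel k))) > ereal (- \<epsilon>)) sequentially"
    by (rule less_LiminfD, rule less_le_trans[OF _ R2]) (simp add: ep)
  have e3: "eventually (\<lambda>n. (\<Sum>k<n. of_bool (sel k) :: real) > 0) sequentially"
    using cnt[unfolded filterlim_at_top_dense] by blast
  obtain n where
    h1: "(\<Sum>k<n. of_bool (sel k) * (w k - f k)) / (\<Sum>k<n. of_bool (sel k)) < \<epsilon>" and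
    h2: "(\<Sum>k<n. of_bool (sel k) * (w k - a)) / (\<Sum>k<n. of_bool (sel k)) > - \<epsilon>" and
    h3: "(\<Sum>k<n. of_bool (sel k) :: real) > 0"
    using eventually_happens'[OF _ eventually_conj[OF e1 eventually_conj[OF e2 e3]]] by auto
  define C where "C = (\<Sum>k<n. of_bool (sel k) :: real)"
  have "(\<Sum>k<n. of_bool (sel k) * (w k - a)) = (\<Sum>k<n. of_bool (sel k) * (w k - f k)) + (\<Sum>k<n. of_bool (sel k) * (f k - a))"
    by (simp add: sum.distrib[symmetric] algebra_simps)
  moreover have "(\<Sum>k<n. of_bool (sel k) * (f k - a)) \<le> (\<Sum>k<n. of_bool (sel k) * (r2 - a))"
    by (rule sum_mono) (use sel in auto)
  moreover have "(\<Sum>k<n. of_bool (sel k) * (r2 - a)) = C * (r2 - a)"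
    by (simp add: C_def sum_distrib_right)
  ultimately have 1: "(\<Sum>k<n. of_bool (sel k) * (w k - a)) \<le> (\<Sum>k<n. of_bool (sel k) * (w k - f k)) + C * (r2 - a)"
    by linarith
  have "(\<Sum>k<n. of_bool (sel k) * (w k - a)) / C \<le> (\<Sum>k<n. of_bool (sel k) * (w k - f k)) / C + (r2 - a)"
    by (rule div_aux1[OF _ 1]) (use h3 in \<open>simp add: C_def\<close>)
  with h1 h2 show False unfolding C_def \<epsilon>_def by (rule aux3)
qed

lemma core_lower:
  fixes w g :: "nat \<Rightarrow> real" and sel :: "nat \<Rightarrow> bool" and b r2 :: real
  assumes cnt: "filterlim (\<lambda>n. \<Sum>k<n. of_bool (sel k) :: real) at_top sequentially"
    and R1: "liminf (\<lambda>n. ereal ((\<Sum>k<n. of_bool (sel k) * (w k - g k)) / (\<Sum>k<n. of_bool (sel k)))) \<ge> 0"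
    and R2: "limsup (\<lambda>n. ereal ((\<Sum>k<n. of_bool (sel k) * (w k - b)) / (\<Sum>k<n. of_bool (sel k)))) \<le> 0"
    and sel: "\<And>k. sel k \<Longrightarrow> r2 \<le> g k"
  shows "r2 \<le> b"
proof (rule ccontr)
  assume "\<not> r2 \<le> b"
  define \<epsilon> where "\<epsilon> = (r2 - b) / 2"
  have ep: "\<epsilon> > 0" using \<open>\<not> r2 \<le> b\<close> by (simp add: \<epsilon>_def)
  have e1: "eventually (\<lambda>n. ereal ((\<Sum>k<n. of_bool (sel k) * (w k - b)) / (\<Sum>k<n. of_bool (sel k))) < ereal \<epsilon>) sequentially"
    by (rule Limsup_lessD, rule le_less_trans[OF R2]) (simp add: ep)
  have e2: "eventually (\<lambda>n. ereal ((\<Sum>k<n. of_bool (sel k) * (w k - g k)) / (\<Sum>k<n. of_bool (sel k))) > ereal (- \<epsilon>)) sequentially"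
    by (rule less_LiminfD, rule less_le_trans[OF _ R1]) (simp add: ep)
  have e3: "eventually (\<lambda>n. (\<Sum>k<n. of_bool (sel k) :: real) > 0) sequentially"
    using cnt[unfolded filterlim_at_top_dense] by blast
  obtain n where
    h1: "(\<Sum>k<n. of_bool (sel k) * (w k - b)) / (\<Sum>k<n. of_bool (sel k)) < \<epsilon>" and
    h2: "(\<Sum>k<n. of_bool (sel k) * (w k - g k)) / (\<Sum>k<n. of_bool (sel k)) > - \<epsilon>" and
    h3: "(\<Sum>k<n. of_bool (sel k) :: real) > 0"
    using eventually_happens'[OF _ eventually_conj[OF e1 eventually_conj[OF e2 e3]]] by auto
  define C where "C = (\<Sum>k<n. of_bool (sel k) :: real)"
  have "(\<Sum>k<n. of_bool (sel k) * (w k - b)) = (\<Sum>k<n. of_bool (sel k) * (w k - g k)) + (\<Sum>k<n. of_bool (sel k) * (g k - b))"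
    by (simp add: sum.distrib[symmetric] algebra_simps)
  moreover have "(\<Sum>k<n. of_bool (sel k) * (r2 - b)) \<le> (\<Sum>k<n. of_bool (sel k) * (g k - b))"
    by (rule sum_mono) (use sel in auto)
  moreover have "(\<Sum>k<n. of_bool (sel k) * (r2 - b)) = C * (r2 - b)"
    by (simp add: C_def sum_distrib_right)
  ultimately have 1: "(\<Sum>k<n. of_bool (sel k) * (w k - b)) \<ge> (\<Sum>k<n. of_bool (sel k) * (w k - g k)) + C * (r2 - b)"
    by linarith
  have "(\<Sum>k<n. of_bool (sel k) * (w k - b)) / C \<ge> (\<Sum>k<n. of_bool (sel k) * (w k - g k)) / C + (r2 - b)"
    by (rule div_aux2[OF _ 1]) (use h3 in \<open>simp add: C_def\<close>)
  with h1 h2 show False unfolding C_def \<epsilon>_def by (rule aux4)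
qed

lemma cnt_inf:
  assumes "\<And>M. \<exists>n\<ge>M. P n"
  shows "filterlim (\<lambda>n. \<Sum>k<n. of_bool (P k) :: real) at_top sequentially"
proof -
  define cnt where "cnt n = (\<Sum>k<n. of_bool (P k) :: real)" for n
  have mono: "cnt n \<le> cnt n'" if "n \<le> n'" for n n'
    unfolding cnt_def by (rule sum_mono2) (use that in auto)
  have ex: "\<exists>n. real M \<le> cnt n" for M
  proof (induction M)
    case 0 show ?case by (auto simp: cnt_def intro: sum_nonneg)
  next
    case (Suc M)
    then obtain n where n: "real M \<le> cnt n" by blast
    obtain n' where "n' \<ge> n" "P n'" using assms by blast
    then have "cnt (Suc n') = cnt n' + 1" by (simp add: cnt_def)
    moreover have "cnt n \<le> cnt n'" using mono \<open>n' \<ge> n\<close> by blast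
    ultimately show ?case using n by (intro exI[of _ "Suc n'"]) simp
  qed
  show ?thesis
    unfolding filterlim_at_top
  proof
    fix Z :: real
    obtain n0 where n0: "real (nat \<lceil>Z\<rceil>) \<le> cnt n0" using ex by blast
    have "Z \<le> real (nat \<lceil>Z\<rceil>)" by linarith
    then show "eventually (\<lambda>n. Z \<le> (\<Sum>k<n. of_bool (P k))) sequentially"
      unfolding eventually_sequentially cnt_def[symmetric]
      using n0 mono by (meson order_trans)
  qed
qed


lemma wCH_use:
  assumes "wCH_random \<phi> \<omega>" "recursive_sel S" "temporal S"
    "filterlim (\<lambda>n. \<Sum>k<n. of_bool (S (prefix \<omega> k)) :: real) at_top sequentially"
  shows "liminf (\<lambda>n. ereal ((\<Sum>k<n. of_bool (S (prefix \<omega> k)) *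
                   (of_bool (\<omega> k) - fst (\<phi> (prefix \<omega> k)))) / (\<Sum>k<n. of_bool (S (prefix \<omega> k))))) \<ge> 0"
    "limsup (\<lambda>n. ereal ((\<Sum>k<n. of_bool (S (prefix \<omega> k)) *
                   (of_bool (\<omega> k) - snd (\<phi> (prefix \<omega> k)))) / (\<Sum>k<n. of_bool (S (prefix \<omega> k))))) \<le> 0"
  using assms unfolding wCH_random_def sel_count_def by blast+

lemma length_prefix[simp]: "length (prefix \<omega> n) = n"
  by (simp add: prefix_def)

lemma rel_lt:
  assumes "d > 0"
  shows "(A * d < p * (C + 1) + B * d) \<longleftrightarrow> ((real A - real B) / (real C + 1) < real p / real d)"
proof -
  have "(A * d < p * (C + 1) + B * d) \<longleftrightarrow> real (A * d) < real (p * (C + 1) + B * d)"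
    by (rule of_nat_less_iff[symmetric])
  also have "\<dots> \<longleftrightarrow> real A * real d < real p * (real C + 1) + real B * real d"
    by (simp add: algebra_simps)
  also have "\<dots> \<longleftrightarrow> (real A - real B) * real d < real p * (real C + 1)"
    by (simp add: algebra_simps)
  also have "\<dots> \<longleftrightarrow> ((real A - real B) / (real C + 1) < real p / real d)"
    using assms by (simp add: divide_simps add_pos_nonneg)
  finally show ?thesis .
qed

lemma rel_gt:
  assumes "d > 0"
  shows "(p * (C + 1) + B * d < A * d) \<longleftrightarrow> (real p / real d < (real A - real B) / (real C + 1))"
proof -
  have "(p * (C + 1) + B * d < A * d) \<longleftrightarrow> real (p * (C + 1) + B * d) < real (A * d)"
    by (rule of_nat_less_iff[symmetric])
  also have "\<dots> \<longleftrightarrow> real p * (real C + 1) + real B * real d < real A * real d"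
    by (simp add: algebra_simps)
  also have "\<dots> \<longleftrightarrow> real p * (real C + 1) < (real A - real B) * real d"
    by (simp add: algebra_simps)
  also have "\<dots> \<longleftrightarrow> (real p / real d < (real A - real B) / (real C + 1))"
    using assms by (simp add: divide_simps add_pos_nonneg)
  finally show ?thesis .
qed

lemma pow_small: "(0::real) < \<delta> \<Longrightarrow> \<exists>N::nat. 2 powr (- real N) < \<delta>"
proof -
  assume "0 < \<delta>"
  then obtain N where "(1/2::real) ^ N < \<delta>" using real_arch_pow_inv[of \<delta> "1/2"] by auto
  moreover have "2 powr (- real N) = (1/2::real) ^ N"
    by (simp add: powr_minus powr_realpow power_one_over inverse_eq_divide)
  ultimately have "2 powr (- real N) < \<delta>" by argo
  then show ?thesis by blast
qed


lemma rat_to_real: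
  assumes "q s n = (of_nat (a [enc_sit s, n]) - of_nat (b [enc_sit s, n])) / (of_nat (c [enc_sit s, n]) + 1)"
  shows "real_of_rat (q s n) = (real (a [enc_sit s, n]) - real (b [enc_sit s, n])) / (real (c [enc_sit s, n]) + 1)"
  using assms by (simp add: of_rat_divide of_rat_diff of_rat_add)

lemma pos_rat_nat:
  assumes "m \<in> \<rat>" "m > 0"
  obtains p d :: nat where "d > 0" "m = real p / real d"
proof -
  obtain p d :: nat where "d \<noteq> 0" "\<bar>m\<bar> = real p / real d"
    using Rats_abs_nat_div_natE[OF assms(1)] by metis
  then show ?thesis using that assms(2) by auto
qed

lemma not_eventually_freq:
  assumes "\<not> eventually P sequentially"
  shows "\<exists>n\<ge>M. \<not> P n"
  using assms unfolding eventually_sequentially by blast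

lemma KLU:
  assumes fs: "forecasting_system \<phi>" and tm: "temporal \<phi>" and cp: "computable_fs \<phi>"
    and rd: "wCH_random \<phi> \<omega>" and I: "I \<in> I_wCH_family \<omega>"
  shows "ereal (fst I) \<le> liminf (\<lambda>n. ereal (snd (\<phi> (prefix \<omega> n))))"
proof (rule ccontr)
  define L where "L = liminf (\<lambda>n. ereal (snd (\<phi> (prefix \<omega> n))))"
  define a where "a = fst I"
  assume "\<not> ereal (fst I) \<le> liminf (\<lambda>n. ereal (snd (\<phi> (prefix \<omega> n))))"
  then have nL: "\<not> ereal a \<le> L" by (simp add: a_def L_def)
  then have La: "L < ereal a" by simp
  have L0: "0 \<le> L" unfolding L_def
    by (rule Liminf_bounded, rule always_eventually)
      (use fs in \<open>auto simp: forecasting_system_def valid_interval_def intro: order_trans\<close>)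
  from nL obtain y where y: "y < ereal a" "\<not> eventually (\<lambda>n. y < ereal (snd (\<phi> (prefix \<omega> n)))) sequentially"
    unfolding L_def le_Liminf_iff by blast
  have "0 < ereal a" using L0 La by (rule le_less_trans)
  then have "max y 0 < ereal a" using y(1) by simp
  then obtain r1 where r1: "max y 0 < ereal r1" "ereal r1 < ereal a" using ereal_dense2 by blast
  then have r1a: "r1 < a" and r10: "0 < r1" and yr1: "y < ereal r1" by auto
  have freq: "\<exists>n\<ge>M. snd (\<phi> (prefix \<omega> n)) < r1" for M
  proof -
    obtain n where "n \<ge> M" "\<not> y < ereal (snd (\<phi> (prefix \<omega> n)))"
      using not_eventually_freq[OF y(2)] by blast
    then have "ereal (snd (\<phi> (prefix \<omega> n))) \<le> y" by (simp only: not_less)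
    then have "ereal (snd (\<phi> (prefix \<omega> n))) < ereal r1" using yr1 by (rule le_less_trans)
    then show ?thesis using \<open>n \<ge> M\<close> by (intro exI[of _ n]) simp
  qed
  obtain m where m: "m \<in> \<rat>" "r1 < m" "m < a" using Rats_dense_in_real[OF r1a] by blast
  then have m0: "m > 0" using r10 by simp
  obtain p d :: nat where pd: "d > 0" "m = real p / real d" using pos_rat_nat[OF m(1) m0] by blast
  obtain N :: nat where N: "2 powr (- real N) < min (m - r1) (a - m)"
    using pow_small[of "min (m - r1) (a - m)"] m by auto
  obtain ql qh where rq: "recursive_rat2 qh" and
    ap: "\<And>s n. \<bar>snd (\<phi> s) - real_of_rat (qh s n)\<bar> < 2 powr (- real n)"
    using cp unfolding computable_fs_def by blast
  obtain ah bh ch where rf: "recursive_fn 2 ah" "recursive_fn 2 bh" "recursive_fn 2 ch" and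
    qf: "\<And>s n. qh s n = (of_nat (ah [enc_sit s, n]) - of_nat (bh [enc_sit s, n])) / (of_nat (ch [enc_sit s, n]) + 1)"
    using rq unfolding recursive_rat2_def by blast
  define S where "S = selP ah bh ch N p d True"
  have recS: "recursive_sel S" unfolding S_def by (rule selP_recursive[OF rf])
  have tS: "temporal S" unfolding S_def by (rule selP_temporal)
  have phiE: "\<phi> (prefix \<omega> k) = \<phi> (replicate k False)" for k
    using tm unfolding temporal_def by simp
  have key: "S (prefix \<omega> k) \<longleftrightarrow> real_of_rat (qh (replicate k False) N) < m" for k
  proof -
    have "real_of_rat (qh (replicate k False) N) =
      (real (ah [2^k - 1, N]) - real (bh [2^k - 1, N])) / (real (ch [2^k - 1, N]) + 1)"
      using rat_to_real[of qh "replicate k False" N ah bh ch, OF qf] by (simp add: enc_rep)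
    then show ?thesis unfolding S_def selP_def Let_def length_prefix
      using rel_lt[OF pd(1)] pd(2) by simp
  qed
  have appr: "\<bar>snd (\<phi> (prefix \<omega> k)) - real_of_rat (qh (replicate k False) N)\<bar> < 2 powr (- real N)" for k
    using ap[of "replicate k False" N] phiE[of k] by simp
  have selb: "snd (\<phi> (prefix \<omega> k)) \<le> m + 2 powr (- real N)" if "S (prefix \<omega> k)" for k
    using key[of k] that appr[of k] by linarith
  have freqS: "\<exists>n\<ge>M. S (prefix \<omega> n)" for M
  proof -
    obtain n where n: "n \<ge> M" "snd (\<phi> (prefix \<omega> n)) < r1" using freq by blast
    then have "real_of_rat (qh (replicate n False) N) < m" using appr[of n] N by linarith
    then show ?thesis using n key by blast
  qed
  have cnt: "filterlim (\<lambda>n. \<Sum>k<n. of_bool (S (prefix \<omega> k)) :: real) at_top sequentially"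
    by (rule cnt_inf) (rule freqS)
  have Ir: "wCH_random (\<lambda>_. I) \<omega>" using I unfolding I_wCH_family_def by blast
  have "fst I \<le> m + 2 powr (- real N)"
    by (rule core_upper[where sel="\<lambda>k. S (prefix \<omega> k)" and w="\<lambda>k. of_bool (\<omega> k)"
          and f="\<lambda>k. snd (\<phi> (prefix \<omega> k))", OF cnt wCH_use(2)[OF rd recS tS cnt]
          wCH_use(1)[OF Ir recS tS cnt] selb])
  then show False using N a_def by linarith
qed


lemma KLL:
  assumes fs: "forecasting_system \<phi>" and tm: "temporal \<phi>" and cp: "computable_fs \<phi>"
    and rd: "wCH_random \<phi> \<omega>" and J: "J \<in> I_wCH_family \<omega>"
  shows "limsup (\<lambda>n. ereal (fst (\<phi> (prefix \<omega> n)))) \<le> ereal (snd J)"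
proof (rule ccontr)
  define U where "U = limsup (\<lambda>n. ereal (fst (\<phi> (prefix \<omega> n))))"
  define b where "b = snd J"
  assume "\<not> limsup (\<lambda>n. ereal (fst (\<phi> (prefix \<omega> n)))) \<le> ereal (snd J)"
  then have nU: "\<not> U \<le> ereal b" by (simp add: b_def U_def)
  have b0: "0 \<le> b" using J unfolding I_wCH_family_def valid_interval_def b_def by auto
  from nU obtain y where y: "ereal b < y" "\<not> eventually (\<lambda>n. y > ereal (fst (\<phi> (prefix \<omega> n)))) sequentially"
    unfolding U_def Limsup_le_iff by blast
  obtain r1 where r1: "ereal b < ereal r1" "ereal r1 < y" using ereal_dense2[OF y(1)] by blast
  then have r1b: "b < r1" by simp
  have freq: "\<exists>n\<ge>M. r1 < fst (\<phi> (prefix \<omega> n))" for M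
  proof -
    obtain n where "n \<ge> M" "\<not> y > ereal (fst (\<phi> (prefix \<omega> n)))"
      using not_eventually_freq[OF y(2)] by blast
    then have "y \<le> ereal (fst (\<phi> (prefix \<omega> n)))" by (simp only: not_less)
    then have "ereal r1 < ereal (fst (\<phi> (prefix \<omega> n)))" using r1(2) by (rule less_le_trans[rotated])
    then show ?thesis using \<open>n \<ge> M\<close> by (intro exI[of _ n]) simp
  qed
  obtain m where m: "m \<in> \<rat>" "b < m" "m < r1" using Rats_dense_in_real[OF r1b] by blast
  then have m0: "m > 0" using b0 by simp
  obtain p d :: nat where pd: "d > 0" "m = real p / real d" using pos_rat_nat[OF m(1) m0] by blast
  obtain N :: nat where N: "2 powr (- real N) < min (r1 - m) (m - b)"
    using pow_small[of "min (r1 - m) (m - b)"] m by auto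
  obtain ql qh where rq: "recursive_rat2 ql" and
    ap: "\<And>s n. \<bar>fst (\<phi> s) - real_of_rat (ql s n)\<bar> < 2 powr (- real n)"
    using cp unfolding computable_fs_def by blast
  obtain al bl cl where rf: "recursive_fn 2 al" "recursive_fn 2 bl" "recursive_fn 2 cl" and
    qf: "\<And>s n. ql s n = (of_nat (al [enc_sit s, n]) - of_nat (bl [enc_sit s, n])) / (of_nat (cl [enc_sit s, n]) + 1)"
    using rq unfolding recursive_rat2_def by blast
  define S where "S = selP al bl cl N p d False"
  have recS: "recursive_sel S" unfolding S_def by (rule selP_recursive[OF rf])
  have tS: "temporal S" unfolding S_def by (rule selP_temporal)
  have phiE: "\<phi> (prefix \<omega> k) = \<phi> (replicate k False)" for k
    using tm unfolding temporal_def by simp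
  have key: "S (prefix \<omega> k) \<longleftrightarrow> m < real_of_rat (ql (replicate k False) N)" for k
  proof -
    have "real_of_rat (ql (replicate k False) N) =
      (real (al [2^k - 1, N]) - real (bl [2^k - 1, N])) / (real (cl [2^k - 1, N]) + 1)"
      using rat_to_real[of ql "replicate k False" N al bl cl, OF qf] by (simp add: enc_rep)
    then show ?thesis unfolding S_def selP_def Let_def length_prefix
      using rel_gt[OF pd(1)] pd(2) by simp
  qed
  have appr: "\<bar>fst (\<phi> (prefix \<omega> k)) - real_of_rat (ql (replicate k False) N)\<bar> < 2 powr (- real N)" for k
    using ap[of "replicate k False" N] phiE[of k] by simp
  have selb: "m - 2 powr (- real N) \<le> fst (\<phi> (prefix \<omega> k))" if "S (prefix \<omega> k)" for k
    using key[of k] that appr[of k] by linarith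
  have freqS: "\<exists>n\<ge>M. S (prefix \<omega> n)" for M
  proof -
    obtain n where n: "n \<ge> M" "r1 < fst (\<phi> (prefix \<omega> n))" using freq by blast
    then have "m < real_of_rat (ql (replicate n False) N)" using appr[of n] N by linarith
    then show ?thesis using n key by blast
  qed
  have cnt: "filterlim (\<lambda>n. \<Sum>k<n. of_bool (S (prefix \<omega> k)) :: real) at_top sequentially"
    by (rule cnt_inf) (rule freqS)
  have Jr: "wCH_random (\<lambda>_. J) \<omega>" using J unfolding I_wCH_family_def by blast
  have "m - 2 powr (- real N) \<le> snd J"
    by (rule core_lower[where sel="\<lambda>k. S (prefix \<omega> k)" and w="\<lambda>k. of_bool (\<omega> k)"
          and g="\<lambda>k. fst (\<phi> (prefix \<omega> k))", OF cnt wCH_use(1)[OF rd recS tS cnt]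
          wCH_use(2)[OF Jr recS tS cnt] selb])
  then show False using N b_def by linarith
qed

lemma PAIR:
  assumes I: "I \<in> I_wCH_family \<omega>" and J: "J \<in> I_wCH_family \<omega>"
  shows "fst I \<le> snd J"
proof -
  have recS: "recursive_sel (\<lambda>_. True)"
    by (rule sel_from_rec[where c="constr 1"]) (simp add: rec_const[of 1, simplified])
  have tS: "temporal (\<lambda>_. True)" by (simp add: temporal_def)
  have cnt: "filterlim (\<lambda>n. \<Sum>k<n. of_bool ((\<lambda>_. True) (prefix \<omega> k)) :: real) at_top sequentially"
    by (rule cnt_inf) auto
  have Ir: "wCH_random (\<lambda>_. I) \<omega>" using I unfolding I_wCH_family_def by blast
  have Jr: "wCH_random (\<lambda>_. J) \<omega>" using J unfolding I_wCH_family_def by blast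
  show ?thesis
    by (rule core_upper[where sel="\<lambda>k. (\<lambda>_. True) (prefix \<omega> k)" and w="\<lambda>k. of_bool (\<omega> k)"
          and f="\<lambda>k. snd J", OF cnt wCH_use(2)[OF Jr recS tS cnt]
          wCH_use(1)[OF Ir recS tS cnt]]) simp
qed

lemma unit_in: "(0, 1) \<in> I_wCH_family \<omega>"
  unfolding I_wCH_family_def
proof (intro CollectI conjI)
  show "valid_interval (0, 1)" by (simp add: valid_interval_def)
  show "wCH_random (\<lambda>_. (0, 1)) \<omega>"
    unfolding wCH_random_def
  proof (intro allI impI conjI)
    fix S :: "sit \<Rightarrow> bool"
    show "0 \<le> liminf (\<lambda>n. ereal ((\<Sum>k<n. of_bool (S (prefix \<omega> k)) *
                   (of_bool (\<omega> k) - fst ((\<lambda>_. (0::real, 1::real)) (prefix \<omega> k)))) / sel_count S \<omega> n))"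
      by (rule Liminf_bounded, rule always_eventually)
        (auto simp: sel_count_def intro!: divide_nonneg_nonneg sum_nonneg)
    show "limsup (\<lambda>n. ereal ((\<Sum>k<n. of_bool (S (prefix \<omega> k)) *
                   (of_bool (\<omega> k) - snd ((\<lambda>_. (0::real, 1::real)) (prefix \<omega> k)))) / sel_count S \<omega> n)) \<le> 0"
      by (rule Limsup_bounded, rule always_eventually)
        (auto simp: sel_count_def intro!: divide_nonpos_nonneg sum_nonpos sum_nonneg)
  qed
qed


theorem proposition15:
  fixes \<phi> :: "bool list \<Rightarrow> real \<times> real" and \<omega> :: "nat \<Rightarrow> bool"
  assumes "forecasting_system \<phi>" and "temporal \<phi>" and "computable_fs \<phi>"
    and "wCH_random \<phi> \<omega>"
  shows "I_wCH \<omega> \<noteq> {} \<and>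
    ereal (Inf (I_wCH \<omega>)) \<le> liminf (\<lambda>n. ereal (snd (\<phi> (prefix \<omega> n)))) \<and>
    limsup (\<lambda>n. ereal (fst (\<phi> (prefix \<omega> n)))) \<le> ereal (Sup (I_wCH \<omega>))"
proof -
  define fam where "fam = I_wCH_family \<omega>"
  have u: "(0, 1) \<in> fam" unfolding fam_def by (rule unit_in)
  have ne: "fam \<noteq> {}" using u by blast
  have val: "0 \<le> fst I \<and> fst I \<le> snd I \<and> snd I \<le> 1" if "I \<in> fam" for I
    using that unfolding fam_def I_wCH_family_def valid_interval_def by auto
  have f1: "fst I \<le> 1" if "I \<in> fam" for I using val[OF that] by linarith
  have bda: "bdd_above (fst ` fam)" using f1 by (intro bdd_aboveI[of _ 1]) auto
  have bdb: "bdd_below (snd ` fam)" using val by (intro bdd_belowI[of _ 0]) force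
  have pair: "fst I \<le> snd J" if "I \<in> fam" "J \<in> fam" for I J
    using PAIR that unfolding fam_def by blast
  define x where "x = Sup (fst ` fam)"
  define y where "y = Inf (snd ` fam)"
  have Iw: "I_wCH \<omega> = (\<Inter>I \<in> fam. {fst I..snd I})" unfolding I_wCH_def fam_def by simp
  have x1: "fst J \<le> x" if "J \<in> fam" for J
    unfolding x_def using bda that by (intro cSup_upper) auto
  have x2: "x \<le> snd J" if "J \<in> fam" for J
    unfolding x_def by (intro cSup_least) (use ne in simp, use pair that in blast)
  have y1: "y \<le> snd J" if "J \<in> fam" for J
    unfolding y_def using bdb that by (intro cInf_lower) auto
  have y2: "fst J \<le> y" if "J \<in> fam" for J
    unfolding y_def by (intro cInf_greatest) (use ne in simp, use pair that in blast)
  have xin: "x \<in> I_wCH \<omega>" unfolding Iw using x1 x2 by auto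
  have yin: "y \<in> I_wCH \<omega>" unfolding Iw using y1 y2 by auto
  have sub: "I_wCH \<omega> \<subseteq> {0..1}" unfolding Iw using u by auto
  have bb: "bdd_below (I_wCH \<omega>)" using sub by (intro bdd_belowI[of _ 0]) auto
  have ba: "bdd_above (I_wCH \<omega>)" using sub by (intro bdd_aboveI[of _ 1]) auto
  have infx: "Inf (I_wCH \<omega>) \<le> x" using bb xin by (rule cInf_lower[rotated])
  have supy: "y \<le> Sup (I_wCH \<omega>)" using ba yin by (rule cSup_upper[rotated])
  have KU: "ereal (fst I) \<le> liminf (\<lambda>n. ereal (snd (\<phi> (prefix \<omega> n))))" if "I \<in> fam" for I
    using KLU[OF assms] that unfolding fam_def by blast
  have KL: "limsup (\<lambda>n. ereal (fst (\<phi> (prefix \<omega> n)))) \<le> ereal (snd J)" if "J \<in> fam" for J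
    using KLL[OF assms] that unfolding fam_def by blast
  have A: "ereal x \<le> liminf (\<lambda>n. ereal (snd (\<phi> (prefix \<omega> n))))"
  proof (cases "liminf (\<lambda>n. ereal (snd (\<phi> (prefix \<omega> n))))")
    case (real l)
    have "fst I \<le> l" if "I \<in> fam" for I using KU[OF that] real by simp
    then have "x \<le> l" unfolding x_def using ne by (intro cSup_least) auto
    then show ?thesis using real by simp
  next
    case PInf then show ?thesis by simp
  next
    case MInf then show ?thesis using KU[OF u] by simp
  qed
  have B: "limsup (\<lambda>n. ereal (fst (\<phi> (prefix \<omega> n)))) \<le> ereal y"
  proof (cases "limsup (\<lambda>n. ereal (fst (\<phi> (prefix \<omega> n))))")
    case (real l)
    have "l \<le> snd J" if "J \<in> fam" for J using KL[OF that] real by simp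
    then have "l \<le> y" unfolding y_def using ne by (intro cInf_greatest) auto
    then show ?thesis using real by simp
  next
    case PInf then show ?thesis using KL[OF u] by simp
  next
    case MInf then show ?thesis by simp
  qed
  show ?thesis
  proof (intro conjI)
    show "I_wCH \<omega> \<noteq> {}" using xin by blast
    show "ereal (Inf (I_wCH \<omega>)) \<le> liminf (\<lambda>n. ereal (snd (\<phi> (prefix \<omega> n))))"
      using infx A by (meson ereal_less_eq(3) order_trans)
    show "limsup (\<lambda>n. ereal (fst (\<phi> (prefix \<omega> n)))) \<le> ereal (Sup (I_wCH \<omega>))"
      using supy B by (meson ereal_less_eq(3) order_trans)
  qed
qed

end
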